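(* Let $n\ge2$, $l\ge1$, $\mathfrak g=C^{(1)}_n$, $B$ the level-$l$ perfect crystal of the context, $\lambda=l\Lambda_0$, $d=2n$, and $i^{(j)}_a=a-1$ for $1\le a\le n+1$, $i^{(j)}_a=2n+1-a$ for $n+2\le a\le 2n$ (all $j\ge1$). Then: (II) $B^{(j)}_d=B$ for all $j\ge1$; (III) $\langle\lambda_j,h_{i^{(j)}_a}\rangle\le\varepsilon_{i^{(j)}_a}(b)$ for all $j\ge1$, $1\le a\le d$, $b\in B^{(j)}_{a-1}$; (IV') for all $j\ge1$, $a=1,\dots,d$: $\varepsilon_{i^{(j)}_{a+1}}(b^{(j)}_a)=0$, $\varphi_{i^{(j)}_{a+1}}(b^{(j)}_a)>0$ (with $i^{(j)}_{d+1}:=i^{(j+1)}_1$), and $b^{(j+1)}_0=\tilde f_{i^{(j+1)}_1}^mb^{(j)}_d$ with $m=\langle\lambda_{j+1},h_{i^{(j+1)}_1}\rangle$. Moreover $B^{(j)}_0=\{(0,\dots,0)\}$, $B^{(j)}_{2n}=B$; for $1\le a\le n$, $B^{(j)}_a$ is the set of $b\in B$ with all coordinates $0$ except possibly $x_1,\dots,x_a$; for $1\le a\le n-1$, $B^{(j)}_{n+a}$ is the set of $b\in B$ with all coordinates $0$ except possibly $x_1,\dots,x_n,\bar x_n,\dots,\bar x_{n-a+1}$. Also $b^{(j)}_0=(0,\dots,0)$, and for $1\le a\le n$, $b^{(j)}_a$ has $x_a=2l$ and $b^{(j)}_{n+a}$ has $\bar x_{n-a+1}=2l$, all other coordinates 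$0$.
   Context: $(x)_+=\max(x,0)$. $B=\{(x_1,\dots,x_n,\bar x_n,\dots,\bar x_1)\in\mathbb Z^{2n}: x_i,\bar x_i\ge0,\ \sum_{i=1}^n(x_i+\bar x_i)\le 2l,\ \sum_{i=1}^n(x_i+\bar x_i)\in2\mathbb Z\}$. Crystal structure: $\tilde f_0b=(x_1+2,x_2,\dots,\bar x_2,\bar x_1)$ if $x_1\ge\bar x_1$, $(x_1+1,x_2,\dots,\bar x_2,\bar x_1-1)$ if $x_1=\bar x_1-1$, $(x_1,x_2,\dots,\bar x_2,\bar x_1-2)$ if $x_1\le\bar x_1-2$; for $1\le i\le n-1$, $\tilde f_ib$ replaces $(x_i,x_{i+1})$ by $(x_i-1,x_{i+1}+1)$ if $x_{i+1}\ge\bar x_{i+1}$, and $(\bar x_{i+1},\bar x_i)$ by $(\bar x_{i+1}-1,\bar x_i+1)$ if $x_{i+1}<\bar x_{i+1}$; $\tilde f_nb$ replaces $(x_n,\bar x_n)$ by $(x_n-1,\bar x_n+1)$; $\tilde e_ib=b'$ iff $\tilde f_ib'=b$; results outside $B$ mean $0$. With $s(b)=\sum_{i=1}^n(x_i+\bar x_i)$: $\varphi_0(b)=l-\tfrac12s(b)+(\bar x_1-x_1)_+$, $\varepsilon_0(b)=l-\tfrac12 s(b)+(x_1-\bar x_1)_+$; $\varphi_i(b)=x_i+(\bar x_{i+1}-x_{i+1})_+$, $\varepsilon_i(b)=\bar x_i+(x_{i+1}-\bar x_{i+1})_+$ ($1\le i\le n-1$); $\varphi_n(b)=x_n$, $\varepsilon_n(b)=\bar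 x_n$. For $\lambda=l\Lambda_0$: $\lambda_j=l\Lambda_0$ and $\overline b_j=(0,\dots,0)$ for all $j$; $\langle\lambda_j,h_i\rangle$ is the coefficient of $\Lambda_i$ in $\lambda_j$. Given $d$, $i^{(j)}_a$: $B^{(j)}_0=\{\overline b_j\}$, $B^{(j)}_a=\bigcup_{n\ge0}\tilde f_{i^{(j)}_a}^nB^{(j)}_{a-1}\setminus\{0\}$; $b^{(j)}_0=\overline b_j$, $b^{(j)}_a=\tilde f_{i^{(j)}_a}^{\varphi_{i^{(j)}_a}(b^{(j)}_{a-1})}b^{(j)}_{a-1}$. *)

theory Defs
  imports Main
begin

text \<open>Crystal elements of B for C_n^(1) are encoded as int lists of length 2n:
  position i-1 holds x_i (1 \<le> i \<le> n), position 2n-i holds xbar_i (1 \<le> i \<le> n),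
  i.e. the list is (x_1,...,x_n,xbar_n,...,xbar_1).  The crystal operators return
  an option; None represents 0.\<close>

definition xc :: "int list \<Rightarrow> nat \<Rightarrow> int" where
  "xc b i = b ! (i - 1)"

definition xbar :: "nat \<Rightarrow> int list \<Rightarrow> nat \<Rightarrow> int" where
  "xbar n b i = b ! (2*n - i)"

definition crysB :: "nat \<Rightarrow> nat \<Rightarrow> int list set" where
  "crysB n l = {b. length b = 2*n \<and> (\<forall>v\<in>set b. 0 \<le> v)
       \<and> sum_list b \<le> 2 * int l \<and> even (sum_list b)}"

definition sB :: "int list \<Rightarrow> int" where
  "sB b = sum_list b"

definition upd :: "int list \<Rightarrow> nat \<Rightarrow> int \<Rightarrow> int list" where
  "upd b p d = b[p := b ! p + d]"

definition fraw :: "nat \<Rightarrow> nat \<Rightarrow> int list \<Rightarrow> int list" where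
  "fraw n i b =
    (if i = 0 then
       (if xc b 1 \<ge> xbar n b 1 then upd b 0 2
        else if xc b 1 = xbar n b 1 - 1 then upd (upd b 0 1) (2*n - 1) (-1)
        else upd b (2*n - 1) (-2))
     else if i < n then
       (if xc b (i+1) \<ge> xbar n b (i+1)
        then upd (upd b (i - 1) (-1)) i 1
        else upd (upd b (2*n - (i+1)) (-1)) (2*n - i) 1)
     else upd (upd b (n - 1) (-1)) n 1)"

definition ftil :: "nat \<Rightarrow> nat \<Rightarrow> nat \<Rightarrow> int list \<Rightarrow> int list option" where
  "ftil n l i b = (if b \<in> crysB n l \<and> fraw n i b \<in> crysB n l
                   then Some (fraw n i b) else None)"

definition etil :: "nat \<Rightarrow> nat \<Rightarrow> nat \<Rightarrow> int list \<Rightarrow> int list option" where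
  "etil n l i b = (if \<exists>b'. ftil n l i b' = Some b
                   then Some (THE b'. ftil n l i b' = Some b) else None)"

fun fpow :: "nat \<Rightarrow> nat \<Rightarrow> nat \<Rightarrow> nat \<Rightarrow> int list \<Rightarrow> int list option" where
  "fpow n l i 0 b = Some b"
| "fpow n l i (Suc k) b = Option.bind (fpow n l i k b) (ftil n l i)"

definition pos :: "int \<Rightarrow> int" where "pos x = max x 0"

definition phi :: "nat \<Rightarrow> nat \<Rightarrow> nat \<Rightarrow> int list \<Rightarrow> int" where
  "phi n l i b =
    (if i = 0 then int l - sB b div 2 + pos (xbar n b 1 - xc b 1)
     else if i < n then xc b i + pos (xbar n b (i+1) - xc b (i+1))
     else xc b n)"

definition eps :: "nat \<Rightarrow> nat \<Rightarrow> nat \<Rightarrow> int list \<Rightarrow> int" where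
  "eps n l i b =
    (if i = 0 then int l - sB b div 2 + pos (xc b 1 - xbar n b 1)
     else if i < n then xbar n b i + pos (xc b (i+1) - xbar n b (i+1))
     else xbar n b n)"

text \<open>lambda = l Lambda_0, lambda_j = l Lambda_0; <lambda_j, h_i> = coefficient of Lambda_i.\<close>
definition lamh :: "nat \<Rightarrow> nat \<Rightarrow> nat \<Rightarrow> int" where
  "lamh l j i = (if i = 0 then int l else 0)"

definition bbar :: "nat \<Rightarrow> nat \<Rightarrow> int list" where
  "bbar n j = replicate (2*n) 0"

definition idx :: "nat \<Rightarrow> nat \<Rightarrow> nat \<Rightarrow> nat" where
  "idx n j a = (if a \<le> n + 1 then a - 1 else 2*n + 1 - a)"

primrec Bset :: "nat \<Rightarrow> nat \<Rightarrow> nat \<Rightarrow> nat \<Rightarrow> int list set" where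
  "Bset n l j 0 = {bbar n j}"
| "Bset n l j (Suc a) =
     {c. \<exists>b\<in>Bset n l j a. \<exists>k. fpow n l (idx n j (Suc a)) k b = Some c}"

primrec bseq :: "nat \<Rightarrow> nat \<Rightarrow> nat \<Rightarrow> nat \<Rightarrow> int list option" where
  "bseq n l j 0 = Some (bbar n j)"
| "bseq n l j (Suc a) =
     Option.bind (bseq n l j a)
       (\<lambda>b. fpow n l (idx n j (Suc a)) (nat (phi n l (idx n j (Suc a)) b)) b)"

definition idx_next :: "nat \<Rightarrow> nat \<Rightarrow> nat \<Rightarrow> nat" where
  "idx_next n j a = (if a < 2*n then idx n j (a+1) else idx n (j+1) 1)"

end

theory Submission
  imports Defs
begin

lemma sumlu: "k < length xs \<Longrightarrow> sum_list (xs[k := x]) = sum_list xs + x - xs ! k" for xs :: "int list"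
  by (induction xs arbitrary: k) (auto split: nat.splits)

lemma crysB_iff: "b \<in> crysB n l \<longleftrightarrow> length b = 2*n \<and> (\<forall>q<2*n. 0 \<le> b!q) \<and> sum_list b \<le> 2*int l \<and> even (sum_list b)"
  unfolding crysB_def by (auto simp: in_set_conv_nth) (metis nth_mem)

lemma ftil_SomeI: "b \<in> crysB n l \<Longrightarrow> c \<in> crysB n l \<Longrightarrow> fraw n i b = c \<Longrightarrow> ftil n l i b = Some c"
  by (simp add: ftil_def)

lemma ftil_SomeD: "ftil n l i b = Some c \<Longrightarrow> b \<in> crysB n l \<and> c \<in> crysB n l \<and> c = fraw n i b"
  by (auto simp: ftil_def split: if_splits)

lemma fpow_path: "(\<forall>s<k. ftil n l i (g s) = Some (g (Suc s))) \<Longrightarrow> fpow n l i k (g 0) = Some (g k)"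
  by (induction k) auto

lemma fpow_add: "fpow n l i (k1 + k2) b = Option.bind (fpow n l i k1 b) (fpow n l i k2)"
  by (induction k2) (auto split: Option.bind_splits)

lemma fpow_closed: "(\<And>b c. b \<in> S \<Longrightarrow> ftil n l i b = Some c \<Longrightarrow> c \<in> S) \<Longrightarrow> b \<in> S \<Longrightarrow> fpow n l i k b = Some c \<Longrightarrow> c \<in> S"
  by (induction k arbitrary: c) (auto split: Option.bind_splits)

definition DD :: "nat \<Rightarrow> nat \<Rightarrow> nat \<Rightarrow> int list set" where
  "DD n l a = {b \<in> crysB n l. \<forall>q. a \<le> q \<longrightarrow> q < 2*n \<longrightarrow> b!q = 0}"

lemma sum_single: "p < length c \<Longrightarrow> (\<forall>q<length c. q \<noteq> p \<longrightarrow> c!q = 0) \<Longrightarrow> sum_list c = c!p" for c :: "int list"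
proof -
  assume a: "p < length c" "\<forall>q<length c. q \<noteq> p \<longrightarrow> c!q = 0"
  have "c = (replicate (length c) 0)[p := c!p]"
    by (rule nth_equalityI) (use a in \<open>auto simp: nth_list_update\<close>)
  then have "sum_list c = sum_list ((replicate (length c) 0)[p := c!p])" by simp
  also have "\<dots> = c!p" using a by (simp add: sumlu sum_list_replicate)
  finally show ?thesis .
qed

lemma DD0: "DD n l 0 = {replicate (2*n) 0}"
proof -
  have "b = replicate (2*n) 0" if "b \<in> DD n l 0" for b
    using that by (auto simp: DD_def crysB_iff intro!: nth_equalityI)
  moreover have "replicate (2*n) 0 \<in> DD n l 0" by (auto simp: DD_def crysB_iff sum_list_replicate)
  ultimately show ?thesis by blast
qed

lemma upd_nth: "(upd b p d) ! q = (if q = p \<and> p < length b then b!p + d else b!q)"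
  by (auto simp: upd_def nth_list_update list_update_beyond)
lemma upd_len[simp]: "length (upd b p d) = length b"
  by (simp add: upd_def)

lemma clos:
  assumes n: "2 \<le> n" and a: "Suc a \<le> 2*n" and b: "b \<in> DD n l (Suc a)"
    and f: "ftil n l (idx n j (Suc a)) b = Some c"
  shows "c \<in> DD n l (Suc a)"
proof -
  from ftil_SomeD[OF f] have cB: "c \<in> crysB n l" and ce: "c = fraw n (idx n j (Suc a)) b" by auto
  from b have len: "length b = 2*n" and nn: "\<And>q. q < 2*n \<Longrightarrow> 0 \<le> b!q"
    and z: "\<And>q. Suc a \<le> q \<Longrightarrow> q < 2*n \<Longrightarrow> b!q = 0"
    by (auto simp: DD_def crysB_iff)
  have "c!q = 0" if q: "Suc a \<le> q" "q < 2*n" for q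
  proof (cases "a = 0")
    case True
    then have "idx n j (Suc a) = 0" by (simp add: idx_def)
    moreover have "b!(2*n-1) = 0" using z[of "2*n-1"] n True by auto
    moreover have "0 \<le> b!0" using nn n by auto
    ultimately have "c = upd b 0 2" using ce by (simp add: fraw_def xc_def xbar_def)
    then show ?thesis using q z True by (simp add: upd_nth)
  next
    case False
    show ?thesis
    proof (cases "a < n")
      case True
      then have "idx n j (Suc a) = a" by (simp add: idx_def)
      moreover have "b!(2*n-(a+1)) = 0" using z[of "2*n-(a+1)"] True by auto
      moreover have "0 \<le> b!a" using nn True by auto
      ultimately have "c = upd (upd b (a-1) (-1)) a 1" using ce True False
        by (simp add: fraw_def xc_def xbar_def)
      then show ?thesis using q z by (auto simp add: upd_nth)
    next
      case F2: False
      show ?thesis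
      proof (cases "a = n")
        case True
        then have "idx n j (Suc a) = n" by (simp add: idx_def)
        then have "c = upd (upd b (n-1) (-1)) n 1" using ce n by (simp add: fraw_def)
        then show ?thesis using q z True by (auto simp add: upd_nth)
      next
        case F3: False
        then have "idx n j (Suc a) = 2*n - a" using F2 by (simp add: idx_def)
        moreover have "2*n - a < n" "0 < 2*n - a" using F2 F3 a by auto
        ultimately have "c = upd (upd b (2*n-a - 1) (-1)) (2*n-a) 1 \<or>
            c = upd (upd b (2*n - (2*n-a+1)) (-1)) (2*n - (2*n-a)) 1"
          using ce by (auto simp: fraw_def)
        then show ?thesis using q z F2 F3 a by (auto simp: upd_nth)
      qed
    qed
  qed
  then show ?thesis using cB by (auto simp: DD_def)
qed

lemma reach1:
  assumes n: "2 \<le> n" and c: "c \<in> DD n l 1"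
  shows "\<exists>b\<in>DD n l 0. \<exists>k. fpow n l 0 k b = Some c"
proof -
  from c have len: "length c = 2*n" and nn: "\<And>q. q < 2*n \<Longrightarrow> 0 \<le> c!q"
    and z: "\<And>q. 1 \<le> q \<Longrightarrow> q < 2*n \<Longrightarrow> c!q = 0"
    and sm: "sum_list c \<le> 2*int l" and ev: "even (sum_list c)"
    by (auto simp: DD_def crysB_iff)
  have sc: "sum_list c = c!0" using len z n by (intro sum_single) auto
  define g where "g s = c[0 := 2*int s]" for s
  define k where "k = nat (c!0 div 2)"
  have c0: "c!0 = 2 * int k" using ev sc nn[of 0] n by (auto simp: k_def)
  have gk: "g k = c" using c0 by (simp add: g_def) (metis list_update_id)
  have gm: "g s \<in> crysB n l" if "s \<le> k" for s
    using that len nn n sm sc c0 by (auto simp: crysB_iff g_def nth_list_update sumlu)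
  have "g 0 ! q = 0" if "q < 2*n" for q using that z[of q] len by (cases "q = 0") (auto simp: g_def)
  then have gz: "g 0 \<in> DD n l 0"
    using gm[of 0] by (auto simp: DD_def)
  have "ftil n l 0 (g s) = Some (g (Suc s))" if "s < k" for s
  proof (rule ftil_SomeI)
    show "g s \<in> crysB n l" "g (Suc s) \<in> crysB n l" using gm that by auto
    have "g s ! (2*n - 1) = 0" using z[of "2*n-1"] n by (simp add: g_def)
    then show "fraw n 0 (g s) = g (Suc s)" using n len
      by (simp add: fraw_def xc_def xbar_def g_def upd_def add.commute)
  qed
  then have "fpow n l 0 k (g 0) = Some (g k)" by (intro fpow_path) auto
  then show ?thesis using gz gk by auto
qed

lemma reach2:
  assumes n: "2 \<le> n" and a1: "1 \<le> a" and an: "a \<le> n" and c: "c \<in> DD n l (Suc a)"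
  shows "\<exists>b\<in>DD n l a. \<exists>k. fpow n l a k b = Some c"
proof -
  from c have len: "length c = 2*n" and nn: "\<And>q. q < 2*n \<Longrightarrow> 0 \<le> c!q"
    and z: "\<And>q. Suc a \<le> q \<Longrightarrow> q < 2*n \<Longrightarrow> c!q = 0"
    and sm: "sum_list c \<le> 2*int l" and ev: "even (sum_list c)"
    by (auto simp: DD_def crysB_iff)
  define g where "g s = c[a-1 := c!(a-1) + c!a - int s, a := int s]" for s
  define k where "k = nat (c!a)"
  have ck: "c!a = int k" using nn[of a] an n by (auto simp: k_def)
  have gk: "g k = c" using ck by (simp add: g_def) (metis list_update_id)
  have ca1: "0 \<le> c!(a - Suc 0)" using nn[of "a-1"] an n by simp
  have gm: "g s \<in> crysB n l" if "s \<le> k" for s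
  proof -
    have "0 \<le> g s ! q" if "q < 2*n" for q
      using that \<open>s \<le> k\<close> nn[of q] ck ca1 len an n by (auto simp: g_def nth_list_update)
    moreover have "sum_list (g s) = sum_list c" using len a1 an n by (simp add: g_def sumlu nth_list_update)
    ultimately show ?thesis using len sm ev by (simp add: crysB_iff g_def)
  qed
  have "g 0 ! q = 0" if "a \<le> q" "q < 2*n" for q using that z[of q] len a1 by (cases "q = a") (auto simp: g_def)
  then have gz: "g 0 \<in> DD n l a"
    using gm[of 0] by (auto simp: DD_def)
  have "ftil n l a (g s) = Some (g (Suc s))" if "s < k" for s
  proof (rule ftil_SomeI)
    show "g s \<in> crysB n l" "g (Suc s) \<in> crysB n l" using gm that by auto
    show "fraw n a (g s) = g (Suc s)"
    proof (cases "a < n")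
      case True
      have "g s ! (2*n - (a+1)) = 0" using z[of "2*n-(a+1)"] True a1 by (simp add: g_def nth_list_update)
      moreover have "g s ! a = int s" using len an n by (simp add: g_def)
      ultimately show ?thesis using n len a1 True
        by (auto simp: fraw_def xc_def xbar_def g_def upd_def nth_list_update intro!: nth_equalityI)
    next
      case False
      then show ?thesis using n len a1 an
        by (auto simp: fraw_def xc_def xbar_def g_def upd_def nth_list_update intro!: nth_equalityI)
    qed
  qed
  then have "fpow n l a k (g 0) = Some (g k)" by (intro fpow_path) auto
  then show ?thesis using gz gk by auto
qed

lemma reach3:
  assumes n: "2 \<le> n" and a1: "n < a" and an: "a < 2*n" and c: "c \<in> DD n l (Suc a)"
    and i: "i = 2*n - a"
  shows "\<exists>b\<in>DD n l a. \<exists>k. fpow n l i k b = Some c"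
proof -
  from c have len: "length c = 2*n" and nn: "\<And>q. q < 2*n \<Longrightarrow> 0 \<le> c!q"
    and z: "\<And>q. Suc a \<le> q \<Longrightarrow> q < 2*n \<Longrightarrow> c!q = 0"
    and sm: "sum_list c \<le> 2*int l" and ev: "even (sum_list c)"
    by (auto simp: DD_def crysB_iff)
  have i1: "1 \<le> i" "i < n" "2*n - (i+1) = a - 1" "2*n - i = a" using i a1 an by auto
  define X where "X = c!i"
  define Y where "Y = c!(a-1)"
  define T where "T = c!a"
  define S where "S = max (X - Y) 0"
  define W where "W = c!(i-1)"
  have X0: "0 \<le> X" "0 \<le> Y" "0 \<le> T" "0 \<le> W" using nn i1 an a1
    by (auto simp: X_def Y_def T_def W_def)
  define g1 where "g1 s = c[i-1 := W + S, i := X - S, a-1 := Y + T - int s, a := int s]" for s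
  define g2 where "g2 s = c[i-1 := W + S - int s, i := X - S + int s]" for s
  define kT where "kT = nat T"
  define kS where "kS = nat S"
  have pos: "i - 1 < i" "i < a - 1" "a - 1 < a" "a < 2*n" using i1 a1 an by auto
  have g1T: "g1 kT = g2 0"
    using pos len nn[of a] by (auto simp: g1_def g2_def kT_def Y_def T_def nth_list_update intro!: nth_equalityI) 
  have g2S: "g2 kS = c"
    using pos len by (auto simp: g2_def kS_def S_def X_def W_def nth_list_update intro!: nth_equalityI)
  have g1m: "g1 s \<in> crysB n l" if "s \<le> kT" for s
  proof -
    have "0 \<le> g1 s ! q" if "q < 2*n" for q
      using that \<open>s \<le> kT\<close> nn[of q] X0 pos len by (auto simp: g1_def nth_list_update kT_def S_def)
    moreover have "sum_list (g1 s) = sum_list c" using len pos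
      by (simp add: g1_def sumlu nth_list_update W_def X_def Y_def T_def)
    ultimately show ?thesis using len sm ev by (simp add: crysB_iff g1_def)
  qed
  have g2m: "g2 s \<in> crysB n l" if "s \<le> kS" for s
  proof -
    have "0 \<le> g2 s ! q" if "q < 2*n" for q
      using that \<open>s \<le> kS\<close> nn[of q] X0 pos len by (auto simp: g2_def nth_list_update kS_def S_def)
    moreover have "sum_list (g2 s) = sum_list c" using len pos
      by (simp add: g2_def sumlu nth_list_update W_def X_def Y_def T_def)
    ultimately show ?thesis using len sm ev by (simp add: crysB_iff g2_def)
  qed
  have "g1 0 ! q = 0" if "a \<le> q" "q < 2*n" for q using that z[of q] len pos by (cases "q = a") (auto simp: g1_def)
  then have gz: "g1 0 \<in> DD n l a"
    using g1m[of 0] by (auto simp: DD_def)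
  have st1: "ftil n l i (g1 s) = Some (g1 (Suc s))" if "s < kT" for s
  proof (rule ftil_SomeI)
    show "g1 s \<in> crysB n l" "g1 (Suc s) \<in> crysB n l" using g1m that by auto
    have "g1 s ! i = X - S" "g1 s ! (a-1) = Y + T - int s" using pos len by (auto simp: g1_def)
    moreover have "X - S < Y + T - int s" using that by (auto simp: S_def kT_def)
    ultimately have "fraw n i (g1 s) = upd (upd (g1 s) (a-1) (-1)) a 1" using i1
      by (simp add: fraw_def xc_def xbar_def)
    also have "\<dots> = g1 (Suc s)" using pos len
      by (intro nth_equalityI) (auto simp: upd_nth g1_def nth_list_update)
    finally show "fraw n i (g1 s) = g1 (Suc s)" .
  qed
  have st2: "ftil n l i (g2 s) = Some (g2 (Suc s))" if "s < kS" for s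
  proof (rule ftil_SomeI)
    show "g2 s \<in> crysB n l" "g2 (Suc s) \<in> crysB n l" using g2m that by auto
    have "g2 s ! i = X - S + int s" "g2 s ! (a-1) = Y" using pos len by (auto simp: g2_def Y_def)
    moreover have "X - S + int s \<ge> Y" using that by (auto simp: S_def kS_def)
    ultimately have "fraw n i (g2 s) = upd (upd (g2 s) (i-1) (-1)) i 1" using i1
      by (simp add: fraw_def xc_def xbar_def)
    also have "\<dots> = g2 (Suc s)" using pos len
      by (intro nth_equalityI) (auto simp: upd_nth g2_def nth_list_update)
    finally show "fraw n i (g2 s) = g2 (Suc s)" .
  qed
  have "fpow n l i kT (g1 0) = Some (g1 kT)" using st1 by (intro fpow_path) auto
  moreover have "fpow n l i kS (g2 0) = Some (g2 kS)" using st2 by (intro fpow_path) auto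
  ultimately have "fpow n l i (kT + kS) (g1 0) = Some c" using g1T g2S by (simp add: fpow_add)
  then show ?thesis using gz by auto
qed

lemma Bset_DD:
  assumes n: "2 \<le> n"
  shows "a \<le> 2*n \<Longrightarrow> Bset n l j a = DD n l a"
proof (induction a)
  case 0
  then show ?case by (simp add: DD0 bbar_def)
next
  case (Suc a)
  then have IH: "Bset n l j a = DD n l a" by simp
  have sub: "DD n l a \<subseteq> DD n l (Suc a)" by (auto simp: DD_def)
  have "Bset n l j (Suc a) = {c. \<exists>b\<in>DD n l a. \<exists>k. fpow n l (idx n j (Suc a)) k b = Some c}"
    using IH by simp
  also have "\<dots> = DD n l (Suc a)"
  proof
    show "{c. \<exists>b\<in>DD n l a. \<exists>k. fpow n l (idx n j (Suc a)) k b = Some c} \<subseteq> DD n l (Suc a)"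
    proof
      fix c assume "c \<in> {c. \<exists>b\<in>DD n l a. \<exists>k. fpow n l (idx n j (Suc a)) k b = Some c}"
      then obtain b k where b: "b \<in> DD n l a" and f: "fpow n l (idx n j (Suc a)) k b = Some c" by auto
      show "c \<in> DD n l (Suc a)"
        by (rule fpow_closed[OF _ _ f]) (use clos[OF n Suc.prems] sub b in auto)
    qed
  next
    show "DD n l (Suc a) \<subseteq> {c. \<exists>b\<in>DD n l a. \<exists>k. fpow n l (idx n j (Suc a)) k b = Some c}"
    proof
      fix c assume c: "c \<in> DD n l (Suc a)"
      consider "a = 0" | "1 \<le> a" "a \<le> n" | "n < a" by linarith
      then show "c \<in> {c. \<exists>b\<in>DD n l a. \<exists>k. fpow n l (idx n j (Suc a)) k b = Some c}"
      proof cases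
        case 1
        then show ?thesis using reach1[OF n] c by (simp add: idx_def)
      next
        case 2
        then show ?thesis using reach2[OF n 2 c] by (simp add: idx_def)
      next
        case 3
        have "idx n j (Suc a) = 2*n - a" using 3 by (simp add: idx_def)
        then show ?thesis using reach3[OF n 3 _ c, of "2*n-a"] Suc.prems by simp
      qed
    qed
  qed
  finally show ?case .
qed

definition EE :: "nat \<Rightarrow> nat \<Rightarrow> nat \<Rightarrow> int list" where
  "EE n l a = (replicate (2*n) 0)[a-1 := 2 * int l]"

lemma Zm: "(replicate (2*n) 0)[p := 2 * int s] \<in> crysB n l" if "s \<le> l" "p < 2*n" for s
  using that by (auto simp: crysB_iff nth_list_update sumlu sum_list_replicate)

lemma Zm2: "(replicate (2*n) 0)[p := 2 * int l - int s, Suc p := int s] \<in> crysB n l"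
  if "s \<le> 2*l" "Suc p < 2*n" for s
  using that by (auto simp: crysB_iff nth_list_update sumlu sum_list_replicate)

lemma bseq1:
  assumes n: "2 \<le> n"
  shows "bseq n l j 1 = Some (EE n l 1)"
proof -
  define Z where "Z = (replicate (2*n) (0::int))"
  have i: "idx n j 1 = 0" by (simp add: idx_def)
  have ph: "phi n l 0 Z = int l" using n
    by (simp add: phi_def sB_def Z_def sum_list_replicate xc_def xbar_def pos_def)
  define g where "g s = Z[0 := 2*int s]" for s
  have "ftil n l 0 (g s) = Some (g (Suc s))" if "s < l" for s
  proof (rule ftil_SomeI)
    show "g s \<in> crysB n l" "g (Suc s) \<in> crysB n l" using that Zm[of s l 0 n] Zm[of "Suc s" l 0 n] n unfolding g_def Z_def by auto
    show "fraw n 0 (g s) = g (Suc s)" using n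
      by (simp add: fraw_def xc_def xbar_def g_def upd_def Z_def add.commute)
  qed
  then have "fpow n l 0 l (g 0) = Some (g l)" by (intro fpow_path) auto
  moreover have "g 0 = Z" by (auto simp: g_def Z_def nth_list_update intro!: nth_equalityI)
  moreover have "g l = EE n l 1" by (simp add: g_def Z_def EE_def)
  ultimately show ?thesis using i ph by (simp add: Z_def bbar_def)
qed

lemma estep:
  assumes n: "2 \<le> n" and a1: "1 \<le> a" and an: "a < 2*n" and i: "i = idx n j (Suc a)"
  shows "fpow n l i (nat (phi n l i (EE n l a))) (EE n l a) = Some (EE n l (Suc a))"
proof -
  define Z where "Z = (replicate (2*n) (0::int))"
  define g where "g s = Z[a-1 := 2 * int l - int s, a := int s]" for s
  have lenZ: "length Z = 2*n" by (simp add: Z_def)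
  have ph: "phi n l i (EE n l a) = 2 * int l"
  proof -
    consider "a < n" | "a = n" | "n < a" by linarith
    then show ?thesis
    proof cases
      case 1
      then have "i = a" using i by (simp add: idx_def)
      then show ?thesis using 1 a1 n
        by (simp add: phi_def EE_def xc_def xbar_def nth_list_update pos_def)
    next
      case 2
      then have "i = n" using i by (simp add: idx_def)
      then show ?thesis using 2 a1 n
        by (simp add: phi_def EE_def xc_def xbar_def nth_list_update pos_def)
    next
      case 3
      then have "i = 2*n - a" using i by (simp add: idx_def)
      then show ?thesis using 3 a1 n an
        by (simp add: phi_def EE_def xc_def xbar_def nth_list_update pos_def)
    qed
  qed
  have fr: "fraw n i (g s) = upd (upd (g s) (a-1) (-1)) a 1" if "s < 2*l" for s
  proof -
    consider "a < n" | "a = n" | "n < a" by linarith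
    then show ?thesis
    proof cases
      case 1
      then have "i = a" using i by (simp add: idx_def)
      then show ?thesis using 1 a1 n
        by (simp add: fraw_def g_def Z_def xc_def xbar_def nth_list_update)
    next
      case 2
      then have "i = n" using i by (simp add: idx_def)
      then show ?thesis using 2 a1 n
        by (simp add: fraw_def)
    next
      case 3
      then have ii: "i = 2*n - a" using i by (simp add: idx_def)
      have "g s ! i = 0" "g s ! (a-1) = 2 * int l - int s" using ii 3 an a1
        by (auto simp: g_def Z_def nth_list_update)
      have "0 < i" "i < n" "2*n-(i+1) = a-1" "2*n - i = a" using ii 3 an by auto
      then show ?thesis using \<open>g s ! i = 0\<close> \<open>g s ! (a-1) = 2 * int l - int s\<close> that
        by (simp add: fraw_def xc_def xbar_def)
    qed
  qed
  have "ftil n l i (g s) = Some (g (Suc s))" if "s < 2*l" for s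
  proof (rule ftil_SomeI)
    show "g s \<in> crysB n l" "g (Suc s) \<in> crysB n l"
      using that Zm2[of s l "a-1" n] Zm2[of "Suc s" l "a-1" n] an a1 unfolding g_def Z_def by auto
    have "upd (upd (g s) (a-1) (-1)) a 1 = g (Suc s)" using a1 an lenZ
      by (intro nth_equalityI) (auto simp: upd_nth g_def nth_list_update)
    then show "fraw n i (g s) = g (Suc s)" using fr that by simp
  qed
  then have "fpow n l i (2*l) (g 0) = Some (g (2*l))" by (intro fpow_path) auto
  moreover have "g 0 = EE n l a" using a1 an lenZ
    by (intro nth_equalityI) (auto simp: g_def EE_def Z_def nth_list_update)
  moreover have "g (2*l) = EE n l (Suc a)" using a1 an lenZ
    by (intro nth_equalityI) (auto simp: g_def EE_def Z_def nth_list_update)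
  ultimately show ?thesis using ph by (simp add: nat_mult_distrib)
qed

lemma bseqE:
  assumes n: "2 \<le> n"
  shows "1 \<le> a \<Longrightarrow> a \<le> 2*n \<Longrightarrow> bseq n l j a = Some (EE n l a)"
proof (induction a)
  case 0
  then show ?case by simp
next
  case (Suc a)
  show ?case
  proof (cases "a = 0")
    case True
    then show ?thesis using bseq1[OF n] by simp
  next
    case False
    then have "bseq n l j a = Some (EE n l a)" using Suc by simp
    then show ?thesis using estep[OF n _ _ refl, where a=a and j=j and l=l] False Suc.prems by simp
  qed
qed

lemma lastE:
  assumes n: "2 \<le> n"
  shows "fpow n l 0 l (EE n l (2*n)) = Some (replicate (2*n) 0)"
proof -
  define Z where "Z = (replicate (2*n) (0::int))"
  define g where "g s = Z[2*n-1 := 2*int l - 2 * int s]" for s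
  have "ftil n l 0 (g s) = Some (g (Suc s))" if "s < l" for s
  proof (rule ftil_SomeI)
    have e: "2*int l - 2 * int s = 2 * int (l - s)" "2*int l - 2 * int (Suc s) = 2 * int (l - Suc s)"
      using that by auto
    show "g s \<in> crysB n l" "g (Suc s) \<in> crysB n l"
      using Zm[of "l-s" l "2*n-1" n] Zm[of "l - Suc s" l "2*n-1" n] n unfolding g_def Z_def e by auto
    show "fraw n 0 (g s) = g (Suc s)" using n that
      by (simp add: fraw_def xc_def xbar_def g_def upd_def Z_def nth_list_update diff_diff_eq add.commute)
  qed
  then have "fpow n l 0 l (g 0) = Some (g l)" by (intro fpow_path) auto
  moreover have "g l = Z" using n by (auto simp: g_def Z_def nth_list_update intro!: nth_equalityI)
  moreover have "g 0 = EE n l (2*n)" by (simp add: g_def EE_def Z_def)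
  ultimately show ?thesis by (simp add: Z_def)
qed

lemma DD_low:
  assumes "a \<le> n"
  shows "DD n l a = {b\<in>crysB n l. (\<forall>i\<in>{a+1..n}. xc b i = 0) \<and> (\<forall>i\<in>{1..n}. xbar n b i = 0)}"
proof (intro set_eqI iffI)
  fix b assume b: "b \<in> DD n l a"
  then show "b \<in> {b\<in>crysB n l. (\<forall>i\<in>{a+1..n}. xc b i = 0) \<and> (\<forall>i\<in>{1..n}. xbar n b i = 0)}"
    using assms by (auto simp: DD_def xc_def xbar_def)
next
  fix b assume b: "b \<in> {b\<in>crysB n l. (\<forall>i\<in>{a+1..n}. xc b i = 0) \<and> (\<forall>i\<in>{1..n}. xbar n b i = 0)}"
  have "b!q = 0" if q: "a \<le> q" "q < 2*n" for q
  proof (cases "q < n")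
    case True
    then have "xc b (q+1) = 0" using b q by auto
    then show ?thesis by (simp add: xc_def)
  next
    case False
    have "2*n - q \<in> {1..n}" using False q by auto
    then have "xbar n b (2*n-q) = 0" using b by blast
    then show ?thesis using False q by (simp add: xbar_def)
  qed
  then show "b \<in> DD n l a" using b by (auto simp: DD_def)
qed

lemma DD_high:
  assumes "1 \<le> a" "a \<le> n - 1"
  shows "DD n l (n+a) = {b\<in>crysB n l. \<forall>i\<in>{1..n-a}. xbar n b i = 0}"
proof (intro set_eqI iffI)
  fix b assume b: "b \<in> DD n l (n+a)"
  then show "b \<in> {b\<in>crysB n l. \<forall>i\<in>{1..n-a}. xbar n b i = 0}"
    using assms by (auto simp: DD_def xbar_def)
next
  fix b assume b: "b \<in> {b\<in>crysB n l. \<forall>i\<in>{1..n-a}. xbar n b i = 0}"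
  have "b!q = 0" if q: "n + a \<le> q" "q < 2*n" for q
  proof -
    have "2*n - q \<in> {1..n-a}" using q assms by auto
    then have "xbar n b (2*n-q) = 0" using b by blast
    then show ?thesis using q by (simp add: xbar_def)
  qed
  then show "b \<in> DD n l (n+a)" using b by (auto simp: DD_def)
qed

lemma DD_top: "DD n l (2*n) = crysB n l"
  by (auto simp: DD_def)

lemma eps_nonneg:
  assumes "b \<in> crysB n l" "1 \<le> i" "i \<le> n"
  shows "0 \<le> eps n l i b"
  using assms by (auto simp: eps_def crysB_iff xbar_def pos_def)

lemma sumE: "a \<ge> 1 \<Longrightarrow> a \<le> 2*n \<Longrightarrow> sB (EE n l a) = 2 * int l"
  by (simp add: sB_def EE_def sumlu sum_list_replicate)

lemma EE_nth: "a \<ge> 1 \<Longrightarrow> a \<le> 2*n \<Longrightarrow> q < 2*n \<Longrightarrow> EE n l a ! q = (if q = a - 1 then 2 * int l else 0)"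
  by (simp add: EE_def nth_list_update)

lemma EE_len[simp]: "length (EE n l a) = 2*n" by (simp add: EE_def)

lemma IVp:
  assumes n: "2 \<le> n" and l: "1 \<le> l" and a1: "1 \<le> a" and an: "a \<le> 2*n"
  shows "eps n l (idx_next n j a) (EE n l a) = 0 \<and> phi n l (idx_next n j a) (EE n l a) > 0"
proof -
  consider "a < n" | "a = n" | "n < a" "a < 2*n" | "a = 2*n" using an by linarith
  then show ?thesis
  proof cases
    case 1
    then have "idx_next n j a = a" by (simp add: idx_next_def idx_def)
    then show ?thesis using 1 a1 n l
      by (simp add: phi_def eps_def EE_nth xc_def xbar_def pos_def)
  next
    case 2
    then have "idx_next n j a = n" by (simp add: idx_next_def idx_def)
    then show ?thesis using 2 a1 n l
      by (simp add: phi_def eps_def EE_nth xc_def xbar_def pos_def)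
  next
    case 3
    then have ii: "idx_next n j a = 2*n - a" by (simp add: idx_next_def idx_def)
    have "0 < 2*n - a" "2*n - a < n" "2*n - (2*n-a) = a" "2*n - (2*n - a + 1) = a - 1"
      "2*n - a - 1 < 2*n" "2*n - a < 2*n" using 3 by auto
    then show ?thesis using ii 3 a1 n l
      by (auto simp add: phi_def eps_def EE_nth xc_def xbar_def pos_def)
  next
    case 4
    then have "idx_next n j a = 0" by (simp add: idx_next_def idx_def)
    then show ?thesis using 4 a1 n l sumE[of a n l]
      by (simp add: phi_def eps_def EE_nth xc_def xbar_def pos_def)
  qed
qed

theorem mainTheorem8:
  fixes n l :: nat
  assumes "n \<ge> 2" and "l \<ge> 1"
  shows
    \<comment> \<open>(II)\<close>
    "(\<forall>j\<ge>1. Bset n l j (2*n) = crysB n l)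
     \<comment> \<open>(III)\<close>
     \<and> (\<forall>j\<ge>1. \<forall>a\<in>{1..2*n}. \<forall>b\<in>Bset n l j (a-1).
           lamh l j (idx n j a) \<le> eps n l (idx n j a) b)
     \<comment> \<open>(IV')\<close>
     \<and> (\<forall>j\<ge>1. \<forall>a\<in>{1..2*n}. \<exists>c. bseq n l j a = Some c
           \<and> eps n l (idx_next n j a) c = 0 \<and> phi n l (idx_next n j a) c > 0)
     \<and> (\<forall>j\<ge>1. bseq n l (j+1) 0 =
           Option.bind (bseq n l j (2*n))
             (fpow n l (idx n (j+1) 1) (nat (lamh l (j+1) (idx n (j+1) 1)))))
     \<comment> \<open>explicit description of the sets\<close>
     \<and> (\<forall>j\<ge>1. Bset n l j 0 = {replicate (2*n) 0})
     \<and> (\<forall>j\<ge>1. \<forall>a\<in>{1..n}. Bset n l j a =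
           {b\<in>crysB n l. (\<forall>i\<in>{a+1..n}. xc b i = 0) \<and> (\<forall>i\<in>{1..n}. xbar n b i = 0)})
     \<and> (\<forall>j\<ge>1. \<forall>a\<in>{1..n-1}. Bset n l j (n+a) =
           {b\<in>crysB n l. \<forall>i\<in>{1..n-a}. xbar n b i = 0})
     \<comment> \<open>explicit description of the elements b^(j)_a\<close>
     \<and> (\<forall>j\<ge>1. bseq n l j 0 = Some (replicate (2*n) 0))
     \<and> (\<forall>j\<ge>1. \<forall>a\<in>{1..n}. \<exists>c. bseq n l j a = Some c \<and> length c = 2*n
           \<and> xc c a = 2 * int l \<and> (\<forall>i\<in>{1..n}. i \<noteq> a \<longrightarrow> xc c i = 0)
           \<and> (\<forall>i\<in>{1..n}. xbar n c i = 0))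
     \<and> (\<forall>j\<ge>1. \<forall>a\<in>{1..n}. \<exists>c. bseq n l j (n+a) = Some c \<and> length c = 2*n
           \<and> xbar n c (n-a+1) = 2 * int l \<and> (\<forall>i\<in>{1..n}. xc c i = 0)
           \<and> (\<forall>i\<in>{1..n}. i \<noteq> n-a+1 \<longrightarrow> xbar n c i = 0))"
proof -
  note n = assms(1) and l = assms(2)
  have BD: "\<And>j a. a \<le> 2*n \<Longrightarrow> Bset n l j a = DD n l a" using Bset_DD[OF n] by blast
  have c1: "\<forall>j\<ge>1. Bset n l j (2*n) = crysB n l" using BD DD_top by simp
  have c2: "\<forall>j\<ge>1. \<forall>a\<in>{1..2*n}. \<forall>b\<in>Bset n l j (a-1).
           lamh l j (idx n j a) \<le> eps n l (idx n j a) b"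
  proof (intro allI impI ballI)
    fix j a b assume j: "1 \<le> j" and a: "a \<in> {1..2*n}" and b: "b \<in> Bset n l j (a-1)"
    show "lamh l j (idx n j a) \<le> eps n l (idx n j a) b"
    proof (cases "a = 1")
      case True
      then have "b = replicate (2*n) 0" using b by (simp add: bbar_def)
      then show ?thesis using True n
        by (simp add: idx_def lamh_def eps_def sB_def sum_list_replicate pos_def xc_def xbar_def)
    next
      case False
      then have "1 \<le> idx n j a" "idx n j a \<le> n" using a by (auto simp: idx_def)
      moreover have "b \<in> crysB n l" using b BD[of "a-1" j] a by (auto simp: DD_def)
      ultimately show ?thesis using eps_nonneg by (simp add: lamh_def)
    qed
  qed
  have c3: "\<forall>j\<ge>1. \<forall>a\<in>{1..2*n}. \<exists>c. bseq n l j a = Some c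
           \<and> eps n l (idx_next n j a) c = 0 \<and> phi n l (idx_next n j a) c > 0"
    using bseqE[OF n] IVp[OF n l] by auto
  have c4: "\<forall>j\<ge>1. bseq n l (j+1) 0 =
           Option.bind (bseq n l j (2*n))
             (fpow n l (idx n (j+1) 1) (nat (lamh l (j+1) (idx n (j+1) 1))))"
    using bseqE[OF n, of "2*n"] lastE[OF n, of l] n by (simp add: idx_def lamh_def bbar_def)
  have c5: "\<forall>j\<ge>1. Bset n l j 0 = {replicate (2*n) 0}" by (simp add: bbar_def)
  have c6: "\<forall>j\<ge>1. \<forall>a\<in>{1..n}. Bset n l j a =
           {b\<in>crysB n l. (\<forall>i\<in>{a+1..n}. xc b i = 0) \<and> (\<forall>i\<in>{1..n}. xbar n b i = 0)}"
    using BD DD_low by simp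
  have c7: "\<forall>j\<ge>1. \<forall>a\<in>{1..n-1}. Bset n l j (n+a) =
           {b\<in>crysB n l. \<forall>i\<in>{1..n-a}. xbar n b i = 0}"
  proof (intro allI impI ballI)
    fix j a :: nat assume "1 \<le> j" "a \<in> {1..n-1}"
    then show "Bset n l j (n+a) = {b\<in>crysB n l. \<forall>i\<in>{1..n-a}. xbar n b i = 0}"
      using BD[of "n+a" j] DD_high[of a n l] by auto
  qed
  have c8: "\<forall>j\<ge>1. bseq n l j 0 = Some (replicate (2*n) 0)" by (simp add: bbar_def)
  have c9: "\<forall>j\<ge>1. \<forall>a\<in>{1..n}. \<exists>c. bseq n l j a = Some c \<and> length c = 2*n
           \<and> xc c a = 2 * int l \<and> (\<forall>i\<in>{1..n}. i \<noteq> a \<longrightarrow> xc c i = 0)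
           \<and> (\<forall>i\<in>{1..n}. xbar n c i = 0)"
  proof (intro allI impI ballI)
    fix j a :: nat assume "1 \<le> j" "a \<in> {1..n}"
    then show "\<exists>c. bseq n l j a = Some c \<and> length c = 2*n
           \<and> xc c a = 2 * int l \<and> (\<forall>i\<in>{1..n}. i \<noteq> a \<longrightarrow> xc c i = 0)
           \<and> (\<forall>i\<in>{1..n}. xbar n c i = 0)"
      using bseqE[OF n, of a l j] by (auto simp: xc_def xbar_def EE_nth; arith)
  qed
  have c10: "\<forall>j\<ge>1. \<forall>a\<in>{1..n}. \<exists>c. bseq n l j (n+a) = Some c \<and> length c = 2*n
           \<and> xbar n c (n-a+1) = 2 * int l \<and> (\<forall>i\<in>{1..n}. xc c i = 0)
           \<and> (\<forall>i\<in>{1..n}. i \<noteq> n-a+1 \<longrightarrow> xbar n c i = 0)"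
  proof (intro allI impI ballI)
    fix j a :: nat assume "1 \<le> j" "a \<in> {1..n}"
    then show "\<exists>c. bseq n l j (n+a) = Some c \<and> length c = 2*n
           \<and> xbar n c (n-a+1) = 2 * int l \<and> (\<forall>i\<in>{1..n}. xc c i = 0)
           \<and> (\<forall>i\<in>{1..n}. i \<noteq> n-a+1 \<longrightarrow> xbar n c i = 0)"
      using bseqE[OF n, of "n+a" l j] by (auto simp: xc_def xbar_def EE_nth; arith)
  qed
  show ?thesis using c1 c2 c3 c4 c5 c6 c7 c8 c9 c10 by blast
qed

end
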